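(* In any symmetric equilibrium of the two-player game, in which both players use the mixed strategy $(\rho,\sigma)$, the function $\rho$ is continuous at every $t>0$.
   Context: Two-player game. Two players $i\in\{1,2\}$. A state $\omega\in\{H,L\}$ is drawn once and stays fixed; players share the prior $p_0=\Pr(\omega=H)\in(0,1)$. Time is continuous, $t\in[0,\infty)$, no discounting. At any time a player who has not yet acted either takes an irreversible action $x\in\{S,R\}$ (after which she is out of the game) or continues acquiring information at flow cost $c>0$ per unit of time. Action $S$ yields $0$. Action $R$ taken in state $\omega$ yields $u_\omega$ if the opponent has not taken $R$ before or at that instant, $u_\omega-\bar\Delta_\omega$ if the opponent took $R$ strictly earlier, and $u_\omega-\underline\Delta_\omega$ if both take $R$ at the same instant. Standing assumptions: (A1) $\bar\Delta_\omega>\underline\Delta_\omega>0$ for $\omega\in\{H,L\}$; (A2) $u_L<0<u_H-\bar\Delta_H$. While acquiring information, independently across players, in state $H$ an $H$-revealing signal (revealing $\omega=H$) arrives at Poisson rate $a$, and in state $L$ an $L$-revealing signal (revealing $\omega=L$) arrives at Poisson rate $b$, with $b>a>0$. Signals and actions are private (a player never observes the opponent's signals or actions). Absent a revealing signal, a player's belief $p_t=\Pr(H)$ satisfies $dp_t/dt=(b-a)p_t(1-p_t)$, i.e. $\frac{p_t}{1-p_t}=L_t:=\frac{p_0}{1-p_0}e^{(b-a)t}$. A player who receives an $H$-revealing signal takes $R$ immediately; one who receives an $L$-revealing signal takes $S$ immediately. A mixed strategy is a pair $(\rho,\sigma)$ of non-decreasing right-continuous functions $[0,\infty)\to[0,1]$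 with $\rho(t)+\sigma(t)\le 1$ for all $t$, where $\rho(t)$ (resp. $\sigma(t)$) is the probability that the player has stopped and taken $R$ (resp. $S$) at or before time $t$ conditional on having received no revealing signal. A pure strategy $(T,x)$ means: absent a revealing signal, acquire information until time $T$ and then take action $x$. A player's expected payoff is her expected action payoff minus $c$ times her expected time spent acquiring information, given the opponent's strategy and the signal processes. An equilibrium is a strategy pair in which each player's strategy maximizes her expected payoff given the other's; it is symmetric if both use the same strategy. *)

theory Defs
  imports "HOL-Analysis.Analysis"
begin

text \<open>Parameters of the game: prior p0, signal rates a (in H) and b (in L), flow cost c,
  stand-alone payoffs uH, uL, penalties dbH, dbL (opponent took R strictly earlier),
  dlH, dlL (simultaneous R).\<close>
record params =
  p0 :: real
  ra :: real
  rb :: real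
  cost :: real
  uH :: real
  uL :: real
  dbH :: real
  dbL :: real
  dlH :: real
  dlL :: real

definition standing :: "params \<Rightarrow> bool" where
  "standing g \<longleftrightarrow> 0 < p0 g \<and> p0 g < 1 \<and> cost g > 0 \<and> 0 < ra g \<and> ra g < rb g
     \<and> dbH g > dlH g \<and> dlH g > 0 \<and> dbL g > dlL g \<and> dlL g > 0
     \<and> uL g < 0 \<and> 0 < uH g - dbH g"

definition is_strategy :: "(real \<Rightarrow> real) \<Rightarrow> (real \<Rightarrow> real) \<Rightarrow> bool" where
  "is_strategy \<rho> \<sigma> \<longleftrightarrow> mono_on {0..} \<rho> \<and> mono_on {0..} \<sigma>
     \<and> (\<forall>t\<ge>0. continuous (at_right t) \<rho> \<and> continuous (at_right t) \<sigma>)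
     \<and> (\<forall>t\<ge>0. 0 \<le> \<rho> t \<and> \<rho> t \<le> 1 \<and> 0 \<le> \<sigma> t \<and> \<sigma> t \<le> 1 \<and> \<rho> t + \<sigma> t \<le> 1)"

text \<open>Lebesgue--Stieltjes measure d rho on the real line (rho extended by 0 on negative times,
  so an atom rho(0) sits at time 0).\<close>
definition stieltjes :: "(real \<Rightarrow> real) \<Rightarrow> real measure" where
  "stieltjes F = interval_measure (\<lambda>t. if t < 0 then 0 else F t)"

text \<open>Probability that the opponent (strategy rho, sigma) has taken R at or before t
  (cumH, cumL) resp. strictly before t (cumH_lt, cumL_lt), in state H resp. L.
  In state H the opponent takes R either by her plan absent a signal, or upon an H-signal
  (rate a); in state L only by her plan absent an L-signal (rate b).\<close>
definition cumH :: "params \<Rightarrow> (real \<Rightarrow> real) \<Rightarrow> (real \<Rightarrow> real) \<Rightarrow> real \<Rightarrow> real" where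
  "cumH g \<rho> \<sigma> t = (\<integral>x. indicator {0..t} x * exp (- ra g * x) \<partial>stieltjes \<rho>)
     + (LBINT x:{0..t}. ra g * exp (- ra g * x) * (1 - \<rho> x - \<sigma> x))"

definition cumH_lt :: "params \<Rightarrow> (real \<Rightarrow> real) \<Rightarrow> (real \<Rightarrow> real) \<Rightarrow> real \<Rightarrow> real" where
  "cumH_lt g \<rho> \<sigma> t = (\<integral>x. indicator {0..<t} x * exp (- ra g * x) \<partial>stieltjes \<rho>)
     + (LBINT x:{0..<t}. ra g * exp (- ra g * x) * (1 - \<rho> x - \<sigma> x))"

definition cumL :: "params \<Rightarrow> (real \<Rightarrow> real) \<Rightarrow> real \<Rightarrow> real" where
  "cumL g \<rho> t = (\<integral>x. indicator {0..t} x * exp (- rb g * x) \<partial>stieltjes \<rho>)"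

definition cumL_lt :: "params \<Rightarrow> (real \<Rightarrow> real) \<Rightarrow> real \<Rightarrow> real" where
  "cumL_lt g \<rho> t = (\<integral>x. indicator {0..<t} x * exp (- rb g * x) \<partial>stieltjes \<rho>)"

definition payR_H :: "params \<Rightarrow> (real \<Rightarrow> real) \<Rightarrow> (real \<Rightarrow> real) \<Rightarrow> real \<Rightarrow> real" where
  "payR_H g \<rho>' \<sigma>' t = uH g - dbH g * cumH_lt g \<rho>' \<sigma>' t
      - dlH g * (cumH g \<rho>' \<sigma>' t - cumH_lt g \<rho>' \<sigma>' t)"

definition payR_L :: "params \<Rightarrow> (real \<Rightarrow> real) \<Rightarrow> real \<Rightarrow> real" where
  "payR_L g \<rho>' t = uL g - dbL g * cumL_lt g \<rho>' t
      - dlL g * (cumL g \<rho>' t - cumL_lt g \<rho>' t)"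

text \<open>Expected payoff of a player using (rho, sigma) against an opponent using (rho', sigma'):
  expected action payoff minus c times expected time spent acquiring information.\<close>
definition payoff :: "params \<Rightarrow> (real \<Rightarrow> real) \<Rightarrow> (real \<Rightarrow> real) \<Rightarrow> (real \<Rightarrow> real) \<Rightarrow> (real \<Rightarrow> real) \<Rightarrow> real" where
  "payoff g \<rho> \<sigma> \<rho>' \<sigma>' =
     p0 g * ( (\<integral>t. indicator {0..} t * exp (- ra g * t) * payR_H g \<rho>' \<sigma>' t \<partial>stieltjes \<rho>)
            + (LBINT t:{0..}. ra g * exp (- ra g * t) * (1 - \<rho> t - \<sigma> t) * payR_H g \<rho>' \<sigma>' t)
            - cost g * (LBINT t:{0..}. exp (- ra g * t) * (1 - \<rho> t - \<sigma> t)) )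
   + (1 - p0 g) * ( (\<integral>t. indicator {0..} t * exp (- rb g * t) * payR_L g \<rho>' t \<partial>stieltjes \<rho>)
            - cost g * (LBINT t:{0..}. exp (- rb g * t) * (1 - \<rho> t - \<sigma> t)) )"

definition sym_equilibrium :: "params \<Rightarrow> (real \<Rightarrow> real) \<Rightarrow> (real \<Rightarrow> real) \<Rightarrow> bool" where
  "sym_equilibrium g \<rho> \<sigma> \<longleftrightarrow> is_strategy \<rho> \<sigma>
     \<and> (\<forall>\<rho>' \<sigma>'. is_strategy \<rho>' \<sigma>' \<longrightarrow> payoff g \<rho>' \<sigma>' \<rho> \<sigma> \<le> payoff g \<rho> \<sigma> \<rho> \<sigma>)"

end

theory Submission
  imports Defs "HOL-Probability.Distribution_Functions"
begin


lemma stj_basic: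
  fixes G :: "real \<Rightarrow> real"
  assumes mono: "\<And>x y. x \<le> y \<Longrightarrow> G x \<le> G y" and rc: "\<And>a. continuous (at_right a) G"
    and neg: "\<And>x. x < 0 \<Longrightarrow> G x = 0" and bnd: "\<And>x. G x \<le> 1"
  shows "finite_borel_measure (interval_measure G) \<and> cdf (interval_measure G) = G"
proof -
  have nn: "0 \<le> G x" for x
    using mono[of "min x (-1)" x] neg[of "min x (-1)"] by auto
  have "incseq (\<lambda>n. G (real n))" by (auto simp: incseq_def mono)
  then obtain L where L: "(\<lambda>n. G (real n)) \<longlonglongrightarrow> L" "\<forall>i. G (real i) \<le> L"
    using incseq_convergent[of "\<lambda>n. G (real n)" 1] bnd by blast
  have L0: "0 \<le> L" using L(2) nn order_trans by blast
  have top: "(G \<longlongrightarrow> L) at_top"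
    by (rule tendsto_at_topI_sequentially_real) (auto simp: mono_def mono L(1))
  have ev: "eventually (\<lambda>x. G x = 0) at_bot"
    unfolding eventually_at_bot_linorder by (rule exI[of _ "-1"]) (auto intro: neg)
  have bot: "(G \<longlongrightarrow> 0) at_bot"
    by (rule tendsto_eventually[OF ev])
  have fb: "finite_borel_measure (interval_measure G)"
    by (rule finite_borel_measure_interval_measure[OF mono rc bot top L0])
  interpret M: finite_borel_measure "interval_measure G" by (rule fb)
  have diff: "cdf (interval_measure G) y - cdf (interval_measure G) x = G y - G x" if "x < y" for x y
    using M.cdf_diff_eq[OF that] measure_interval_measure_Ioc[of x y G] that mono rc by auto
  have zero: "cdf (interval_measure G) a = 0" if "a < 0" for a
  proof -
    have "eventually (\<lambda>y. cdf (interval_measure G) y = cdf (interval_measure G) a) at_bot"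
      unfolding eventually_at_bot_linorder
    proof (rule exI[of _ "a - 1"], intro allI impI)
      fix y assume "y \<le> a - 1"
      then show "cdf (interval_measure G) y = cdf (interval_measure G) a"
        using diff[of y a] neg[of y] neg[of a] \<open>a < 0\<close> by auto
    qed
    then have "(cdf (interval_measure G) \<longlongrightarrow> cdf (interval_measure G) a) at_bot"
      by (rule tendsto_eventually)
    then show ?thesis using M.cdf_lim_at_bot tendsto_unique[OF trivial_limit_at_bot_linorder] by blast
  qed
  have "cdf (interval_measure G) x = G x" for x
  proof (cases "x < 0")
    case True then show ?thesis using zero neg by simp
  next
    case False
    then show ?thesis using diff[of "-1" x] zero[of "-1"] neg[of "-1"] by auto
  qed
  then show ?thesis using fb by auto
qed

definition extf :: "(real \<Rightarrow> real) \<Rightarrow> real \<Rightarrow> real" where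
  "extf F x = (if x < 0 then 0 else F x)"

lemma stieltjes_extf: "stieltjes F = interval_measure (extf F)"
  unfolding stieltjes_def extf_def by simp

lemma sets_stieltjes [simp, measurable_cong]: "sets (stieltjes F) = sets borel"
  unfolding stieltjes_def by simp

lemma space_stieltjes [simp]: "space (stieltjes F) = UNIV"
  unfolding stieltjes_def by simp

lemma cont_right_evconst:
  fixes g :: "real \<Rightarrow> real"
  assumes "eventually (\<lambda>y. g y = g x) (at_right x)"
  shows "continuous (at_right x) g"
  unfolding continuous_within using assms by (rule tendsto_eventually)

lemma ext_props:
  fixes F :: "real \<Rightarrow> real"
  assumes m: "mono_on {0..} F" and rc: "\<forall>t\<ge>0. continuous (at_right t) F"
    and b: "\<forall>t\<ge>0. 0 \<le> F t \<and> F t \<le> 1"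
  shows "\<And>x y. x \<le> y \<Longrightarrow> extf F x \<le> extf F y"
    "\<And>a. continuous (at_right a) (extf F)" "\<And>x. extf F x \<le> 1" "\<And>x. x < 0 \<Longrightarrow> extf F x = 0"
proof -
  show "extf F x \<le> extf F y" if "x \<le> y" for x y
    using that m b unfolding extf_def mono_on_def by auto
  show "extf F x \<le> 1" for x using b unfolding extf_def by auto
  show "x < 0 \<Longrightarrow> extf F x = 0" for x unfolding extf_def by auto
  show "continuous (at_right a) (extf F)" for a
  proof (cases "a < 0")
    case True
    have "eventually (\<lambda>y. extf F y = extf F a) (at_right a)"
      unfolding eventually_at_right_field using True
      by (intro exI[of _ 0]) (auto simp: extf_def)
    then show ?thesis by (rule cont_right_evconst)
  next
    case False
    have ev: "eventually (\<lambda>y. F y = extf F y) (at_right a)"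
      unfolding eventually_at_right_field using False
      by (intro exI[of _ "a+1"]) (auto simp: extf_def)
    have "(F \<longlongrightarrow> F a) (at_right a)" using rc False unfolding continuous_within by auto
    then have "(extf F \<longlongrightarrow> F a) (at_right a)" using tendsto_cong[OF ev] by simp
    then show ?thesis using False unfolding continuous_within extf_def by simp
  qed
qed

lemma stj_props:
  assumes m: "mono_on {0..} F" and rc: "\<forall>t\<ge>0. continuous (at_right t) F"
    and b: "\<forall>t\<ge>0. 0 \<le> F t \<and> F t \<le> 1"
  shows "finite_borel_measure (stieltjes F) \<and> cdf (stieltjes F) = extf F"
  unfolding stieltjes_extf
  by (rule stj_basic) (use ext_props[OF m rc b] in auto)

lemma strat_stj:
  assumes "is_strategy \<rho> \<sigma>"
  shows "finite_borel_measure (stieltjes \<rho>)" "cdf (stieltjes \<rho>) = extf \<rho>"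
    "finite_borel_measure (stieltjes \<sigma>)" "cdf (stieltjes \<sigma>) = extf \<sigma>"
  using stj_props[of \<rho>] stj_props[of \<sigma>] assms unfolding is_strategy_def by auto

lemma atom_cont:
  assumes "is_strategy \<rho> \<sigma>" "t > 0" "measure (stieltjes \<rho>) {t} = 0"
  shows "isCont \<rho> t"
proof -
  interpret M: finite_borel_measure "stieltjes \<rho>" using strat_stj[OF assms(1)] by simp
  have "isCont (cdf (stieltjes \<rho>)) t" using M.isCont_cdf assms(3) by simp
  then have c: "isCont (extf \<rho>) t" using strat_stj[OF assms(1)] by simp
  have "eventually (\<lambda>x. x \<in> {0<..}) (nhds t)"
    by (rule eventually_nhds_in_open) (use assms(2) in auto)
  then have "eventually (\<lambda>x. extf \<rho> x = \<rho> x) (nhds t)"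
    by eventually_elim (auto simp: extf_def)
  then show ?thesis using c isCont_cong by blast
qed

lemma jump_le:
  assumes st: "is_strategy \<rho> \<sigma>" and "0 \<le> x" "x < t" "t \<le> y"
  shows "\<rho> x + measure (stieltjes \<rho>) {t} \<le> \<rho> y"
proof -
  interpret M: finite_borel_measure "stieltjes \<rho>" using strat_stj[OF st] by simp
  have "cdf (stieltjes \<rho>) y - cdf (stieltjes \<rho>) x = measure (stieltjes \<rho>) {x<..y}"
    using assms by (intro M.cdf_diff_eq) auto
  moreover have "measure (stieltjes \<rho>) {t} \<le> measure (stieltjes \<rho>) {x<..y}"
    using assms by (intro M.finite_measure_mono) auto
  ultimately show ?thesis using strat_stj(2)[OF st] assms by (auto simp: extf_def)
qed

lemma dev_strategy:
  assumes st: "is_strategy \<rho> \<sigma>" and s: "0 \<le> s" "s < t"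
  defines "J \<equiv> measure (stieltjes \<rho>) {t}"
  defines "\<rho>s \<equiv> \<lambda>x. \<rho> x + (if s \<le> x \<and> x < t then J else 0)"
  shows "is_strategy \<rho>s \<sigma>"
proof -
  have J0: "0 \<le> J" unfolding J_def by simp
  have K: "\<rho> x + J \<le> \<rho> y" if "0 \<le> x" "x < t" "t \<le> y" for x y
    using jump_le[OF st that] unfolding J_def .
  from st have m: "mono_on {0..} \<rho>" "mono_on {0..} \<sigma>"
    and rc: "\<forall>t\<ge>0. continuous (at_right t) \<rho> \<and> continuous (at_right t) \<sigma>"
    and b: "\<forall>t\<ge>0. 0 \<le> \<rho> t \<and> \<rho> t \<le> 1 \<and> 0 \<le> \<sigma> t \<and> \<sigma> t \<le> 1 \<and> \<rho> t + \<sigma> t \<le> 1"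
    unfolding is_strategy_def by auto
  have mono_s: "mono_on {0..} \<rho>s"
  proof (rule mono_onI)
    fix x y :: real assume xy: "x \<in> {0..}" "y \<in> {0..}" "x \<le> y"
    have r: "\<rho> x \<le> \<rho> y" using m(1) xy by (auto simp: mono_on_def)
    show "\<rho>s x \<le> \<rho>s y"
      using r K[of x y] xy J0 unfolding \<rho>s_def by auto
  qed
  have rcs: "continuous (at_right x) \<rho>s" if "x \<ge> 0" for x
  proof -
    have "continuous (at_right x) (\<lambda>y. if s \<le> y \<and> y < t then J else 0)"
    proof (rule cont_right_evconst)
      show "eventually (\<lambda>y. (if s \<le> y \<and> y < t then J else 0) = (if s \<le> x \<and> x < t then J else 0)) (at_right x)"
        unfolding eventually_at_right_field
      proof (cases "x < s")
        case True then show "\<exists>b>x. \<forall>y>x. y < b \<longrightarrow> (if s \<le> y \<and> y < t then J else 0) = (if s \<le> x \<and> x < t then J else 0)"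
          by (intro exI[of _ s]) auto
      next
        case False
        show "\<exists>b>x. \<forall>y>x. y < b \<longrightarrow> (if s \<le> y \<and> y < t then J else 0) = (if s \<le> x \<and> x < t then J else 0)"
        proof (cases "x < t")
          case True then show ?thesis using False by (intro exI[of _ t]) auto
        next
          case False2: False then show ?thesis using False by (intro exI[of _ "x+1"]) auto
        qed
      qed
    qed
    then show ?thesis unfolding \<rho>s_def using rc that by (intro continuous_add) auto
  qed
  have bs: "0 \<le> \<rho>s x \<and> \<rho>s x \<le> 1 \<and> \<rho>s x + \<sigma> x \<le> 1" if "x \<ge> 0" for x
  proof (cases "s \<le> x \<and> x < t")
    case True
    have "\<rho> x + J \<le> \<rho> t" using K[of x t] True that by auto
    moreover have "\<sigma> x \<le> \<sigma> t" using m(2) True that by (auto simp: mono_on_def)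
    moreover have "\<rho> t + \<sigma> t \<le> 1" "0 \<le> \<sigma> x" "0 \<le> \<rho> x" using b True that by auto
    ultimately show ?thesis unfolding \<rho>s_def using True J0 by auto
  next
    case False then show ?thesis unfolding \<rho>s_def using b that by auto
  qed
  show ?thesis unfolding is_strategy_def using mono_s rcs bs m rc b by auto
qed

lemma dev_stieltjes:
  assumes st: "is_strategy \<rho> \<sigma>" and s: "0 \<le> s" "s < t"
  defines "J \<equiv> measure (stieltjes \<rho>) {t}"
  defines "\<rho>s \<equiv> \<lambda>x. \<rho> x + (if s \<le> x \<and> x < t then J else 0)"
  shows "stieltjes \<rho>s = distr (stieltjes \<rho>) borel (\<lambda>y. if y = t then s else y)"
proof (rule cdf_unique')
  have sts: "is_strategy \<rho>s \<sigma>" using dev_strategy[OF st s] unfolding \<rho>s_def J_def .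
  interpret M: finite_borel_measure "stieltjes \<rho>" using strat_stj[OF st] by simp
  have meas: "(\<lambda>y::real. if y = t then s else y) \<in> measurable (stieltjes \<rho>) borel"
    by measurable
  interpret D: finite_measure "distr (stieltjes \<rho>) borel (\<lambda>y. if y = t then s else y)"
    by (rule M.finite_measure_distr[OF meas])
  show "finite_borel_measure (distr (stieltjes \<rho>) borel (\<lambda>y. if y = t then s else y))"
    by unfold_locales simp
  show "finite_borel_measure (stieltjes \<rho>s)" using strat_stj[OF sts] by simp
  show "cdf (stieltjes \<rho>s) = cdf (distr (stieltjes \<rho>) borel (\<lambda>y. if y = t then s else y))"
  proof
    fix x
    have pre: "(\<lambda>y. if y = t then s else y) -` {..x} \<inter> space (stieltjes \<rho>) =
      (if s \<le> x \<and> x < t then insert t {..x} else {..x})" using s by (auto split: if_splits)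
    have "cdf (distr (stieltjes \<rho>) borel (\<lambda>y. if y = t then s else y)) x =
       measure (stieltjes \<rho>) (if s \<le> x \<and> x < t then insert t {..x} else {..x})"
      unfolding cdf_def by (subst measure_distr[OF meas]) (use pre in auto)
    also have "\<dots> = extf \<rho> x + (if s \<le> x \<and> x < t then J else 0)"
    proof (cases "s \<le> x \<and> x < t")
      case True
      have "measure (stieltjes \<rho>) (insert t {..x}) = measure (stieltjes \<rho>) ({t} \<union> {..x})" by simp
      also have "\<dots> = J + measure (stieltjes \<rho>) {..x}"
        using True unfolding J_def by (subst M.finite_measure_Union) auto
      finally show ?thesis using True strat_stj(2)[OF st] unfolding cdf_def by (simp add: fun_eq_iff)
    next
      case False then show ?thesis using strat_stj(2)[OF st] unfolding cdf_def
        by (simp only: if_not_P[OF False]) (simp add: fun_eq_iff)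
    qed
    also have "\<dots> = cdf (stieltjes \<rho>s) x"
      using strat_stj(2)[OF sts] s unfolding \<rho>s_def extf_def by auto
    finally show "cdf (stieltjes \<rho>s) x = cdf (distr (stieltjes \<rho>) borel (\<lambda>y. if y = t then s else y)) x" by simp
  qed
qed

lemma int_diff_ge:
  fixes k g :: "'a \<Rightarrow> real"
  assumes "integrable M g" "integral\<^sup>L M g \<le> B" "0 \<le> B"
  shows "integral\<^sup>L M (\<lambda>x. k x - g x) \<ge> integral\<^sup>L M k - B"
proof (cases "integrable M k")
  case True then show ?thesis using assms by (simp add: Bochner_Integration.integral_diff)
next
  case False
  have "\<not> integrable M (\<lambda>x. k x - g x)"
  proof
    assume "integrable M (\<lambda>x. k x - g x)"
    then have "integrable M (\<lambda>x. (k x - g x) + g x)" using assms(1) by (intro Bochner_Integration.integrable_add)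
    then show False using False by simp
  qed
  then show ?thesis using False assms by (simp add: not_integrable_integral_eq)
qed

lemma int_diff_le:
  fixes k g :: "'a \<Rightarrow> real"
  assumes "integrable M g" "0 \<le> integral\<^sup>L M g"
  shows "integral\<^sup>L M (\<lambda>x. k x - g x) \<le> integral\<^sup>L M k"
proof (cases "integrable M k")
  case True then show ?thesis using assms by (simp add: Bochner_Integration.integral_diff)
next
  case False
  have "\<not> integrable M (\<lambda>x. k x - g x)"
  proof
    assume "integrable M (\<lambda>x. k x - g x)"
    then have "integrable M (\<lambda>x. (k x - g x) + g x)" using assms(1) by (intro Bochner_Integration.integrable_add)
    then show False using False by simp
  qed
  then show ?thesis using False assms by (simp add: not_integrable_integral_eq)
qed

lemma mu_int:
  fixes A :: "real set" and c :: real
  assumes "finite_measure M" "sets M = sets borel" "A \<in> sets borel" "A \<subseteq> {0..}" "0 \<le> c"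
  shows "integrable M (\<lambda>y. indicator A y * exp (- c * y))"
proof -
  interpret finite_measure M by fact
  show ?thesis
  proof (rule integrable_const_bound[where B=1])
    show "AE x in M. norm (indicator A x * exp (- c * x)) \<le> 1"
    proof (rule AE_I2)
      fix x show "norm (indicator A x * exp (- c * x)) \<le> (1::real)"
      proof (cases "x \<in> A")
        case True then have "0 \<le> x" using assms(4) by auto
        then have "0 \<le> c * x" using assms(5) by (auto intro!: mult_nonneg_nonneg)
        then show ?thesis using True by simp
      qed simp
    qed
    show "(\<lambda>y. indicator A y * exp (- c * y)) \<in> borel_measurable M"
      using assms(2,3) by (simp add: measurable_cong_sets[OF assms(2) refl])
  qed
qed

lemma extf_meas:
  assumes "is_strategy \<rho> \<sigma>"
  shows "extf \<rho> \<in> borel_measurable borel" "extf \<sigma> \<in> borel_measurable borel"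
proof -
  from assms have m: "mono_on {0..} \<rho>" "mono_on {0..} \<sigma>"
    and rc: "\<forall>t\<ge>0. continuous (at_right t) \<rho> \<and> continuous (at_right t) \<sigma>"
    and b: "\<forall>t\<ge>0. 0 \<le> \<rho> t \<and> \<rho> t \<le> 1 \<and> 0 \<le> \<sigma> t \<and> \<sigma> t \<le> 1 \<and> \<rho> t + \<sigma> t \<le> 1"
    unfolding is_strategy_def by auto
  show "extf \<rho> \<in> borel_measurable borel"
    using ext_props(1)[OF m(1)] rc b by (intro borel_measurable_mono) (auto simp: mono_def)
  show "extf \<sigma> \<in> borel_measurable borel"
    using ext_props(1)[OF m(2)] rc b by (intro borel_measurable_mono) (auto simp: mono_def)
qed

lemma lb_int:
  fixes A :: "real set" and c x0 :: real
  assumes st: "is_strategy \<rho> \<sigma>" and A: "A \<in> sets borel" "A \<subseteq> {0..x0}" and c: "0 \<le> c"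
  shows "integrable lborel (\<lambda>y. indicator A y *\<^sub>R (c * exp (- c * y) * (1 - \<rho> y - \<sigma> y)))"
proof -
  note [measurable] = extf_meas[OF st]
  have b: "\<forall>t\<ge>0. 0 \<le> \<rho> t \<and> \<rho> t \<le> 1 \<and> 0 \<le> \<sigma> t \<and> \<sigma> t \<le> 1 \<and> \<rho> t + \<sigma> t \<le> 1"
    using st unfolding is_strategy_def by auto
  have eq: "(\<lambda>y. indicator A y *\<^sub>R (c * exp (- c * y) * (1 - \<rho> y - \<sigma> y))) =
        (\<lambda>y. indicator A y *\<^sub>R (c * exp (- c * y) * (1 - extf \<rho> y - extf \<sigma> y)))"
    using A by (auto simp: fun_eq_iff extf_def indicator_def)
  have "integrable lborel (\<lambda>y. indicator A y *\<^sub>R (c * exp (- c * y) * (1 - extf \<rho> y - extf \<sigma> y)))"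
  proof (rule integrableI_bounded_set_indicator[where B=c])
    show "A \<in> sets lborel" using A by simp
    show "(\<lambda>y. c * exp (- c * y) * (1 - extf \<rho> y - extf \<sigma> y)) \<in> borel_measurable lborel" by measurable
    have "emeasure lborel A \<le> emeasure lborel {0..x0}" using A by (intro emeasure_mono) auto
    also have "\<dots> < \<infinity>" by (cases "0 \<le> x0") (simp_all add: ennreal_less_top)
    finally show "emeasure lborel A < \<infinity>" .
    show "AE x in lborel. x \<in> A \<longrightarrow> norm (c * exp (- c * x) * (1 - extf \<rho> x - extf \<sigma> x)) \<le> c"
    proof (rule AE_I2, intro impI)
      fix x assume "x \<in> A"
      then have x: "0 \<le> x" using A by auto
      then have e: "exp (- c * x) \<le> 1" "0 < exp (- c * x)" using c by (auto simp: mult_nonneg_nonneg)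
      have ex: "extf \<rho> x = \<rho> x" "extf \<sigma> x = \<sigma> x" using x by (simp_all add: extf_def)
      have bx: "0 \<le> \<rho> x" "0 \<le> \<sigma> x" "\<rho> x + \<sigma> x \<le> 1" using b x by blast+
      have r: "0 \<le> 1 - extf \<rho> x - extf \<sigma> x" "1 - extf \<rho> x - extf \<sigma> x \<le> 1"
        unfolding ex using bx by linarith+
      have p0: "0 \<le> exp (- c * x) * (1 - extf \<rho> x - extf \<sigma> x)"
        using e r by (intro mult_nonneg_nonneg) auto
      have p1: "exp (- c * x) * (1 - extf \<rho> x - extf \<sigma> x) \<le> 1"
        using e r by (intro mult_le_one) auto
      have "\<bar>c * (exp (- c * x) * (1 - extf \<rho> x - extf \<sigma> x))\<bar> \<le> c * 1"
      proof -
        have q: "c * (exp (- c * x) * (1 - extf \<rho> x - extf \<sigma> x)) \<le> c * 1"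
          by (rule mult_left_mono[OF p1 c])
        have q0: "0 \<le> c * (exp (- c * x) * (1 - extf \<rho> x - extf \<sigma> x))"
          using c p0 by simp
        show ?thesis using q q0 by linarith
      qed
      then show "norm (c * exp (- c * x) * (1 - extf \<rho> x - extf \<sigma> x)) \<le> c" by (simp add: mult.assoc)
    qed
  qed
  then show ?thesis using eq by simp
qed

lemma FTC_exp:
  fixes x c :: real
  assumes "0 \<le> x" "0 < c"
  shows "(\<integral>y. indicator {0..x} y *\<^sub>R (c * exp (- c * y)) \<partial>lborel) = 1 - exp (- c * x)"
proof -
  have "(\<integral>y. indicator {0..x} y *\<^sub>R (c * exp (- c * y)) \<partial>lborel) = (- exp (- c * x)) - (- exp (- c * 0))"
  proof (rule integral_FTC_atLeastAtMost[where F="\<lambda>y. - exp (- c * y)", OF assms(1)])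
    fix y :: real
    have "((\<lambda>y. - exp (- c * y)) has_real_derivative (c * exp (- c * y))) (at y within {0..x})"
      by (auto intro!: derivative_eq_intros)
    then show "((\<lambda>y. - exp (- c * y)) has_vector_derivative (c * exp (- c * y))) (at y within {0..x})"
      by (simp add: has_real_derivative_iff_has_vector_derivative)
  next
    show "continuous_on {0..x} (\<lambda>y. c * exp (- c * y))" by (intro continuous_intros)
  qed
  then show ?thesis by simp
qed



lemma strat_b:
  assumes "is_strategy \<rho> \<sigma>" "0 \<le> t"
  shows "0 \<le> \<rho> t" "\<rho> t \<le> 1" "0 \<le> \<sigma> t" "\<sigma> t \<le> 1" "\<rho> t + \<sigma> t \<le> 1"
  using assms unfolding is_strategy_def by blast+

lemma mp_props:
  fixes A B :: "real set" and c :: real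
  assumes fm: "finite_measure M" and sM: "sets M = sets borel"
    and AB: "A \<in> sets borel" "B \<in> sets borel" "A \<subseteq> B" "B \<subseteq> {0..}" and c: "0 \<le> c"
  shows "(\<integral>y. indicator A y * exp (- c * y) \<partial>M) \<le> (\<integral>y. indicator B y * exp (- c * y) \<partial>M)"
    "0 \<le> (\<integral>y. indicator A y * exp (- c * y) \<partial>M)"
    "(\<integral>y. indicator A y * exp (- c * y) \<partial>M) \<le> measure M (space M)"
proof -
  interpret finite_measure M by fact
  have iA: "integrable M (\<lambda>y. indicator A y * exp (- c * y))"
    using AB c by (intro mu_int[OF fm sM]) auto
  have iB: "integrable M (\<lambda>y. indicator B y * exp (- c * y))"
    using AB c by (intro mu_int[OF fm sM]) auto
  show "(\<integral>y. indicator A y * exp (- c * y) \<partial>M) \<le> (\<integral>y. indicator B y * exp (- c * y) \<partial>M)"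
    using iA iB AB by (intro integral_mono) (auto simp: indicator_def)
  show "0 \<le> (\<integral>y. indicator A y * exp (- c * y) \<partial>M)"
    by (intro Bochner_Integration.integral_nonneg) (auto simp: indicator_def)
  have "(\<integral>y. indicator A y * exp (- c * y) \<partial>M) \<le> (\<integral>y. 1 \<partial>M)"
  proof (intro integral_mono iA)
    show "integrable M (\<lambda>y. 1::real)" by simp
    fix y show "indicator A y * exp (- c * y) \<le> (1::real)"
    proof (cases "y \<in> A")
      case True then have "0 \<le> y" using AB by auto
      then have "0 \<le> c * y" using c by (auto intro!: mult_nonneg_nonneg)
      then show ?thesis using True by simp
    qed simp
  qed
  then show "(\<integral>y. indicator A y * exp (- c * y) \<partial>M) \<le> measure M (space M)" by simp
qed

lemma lp_props:
  fixes A B :: "real set" and c x0 :: real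
  assumes st: "is_strategy \<rho> \<sigma>"
    and AB: "A \<in> sets borel" "B \<in> sets borel" "A \<subseteq> B" "B \<subseteq> {0..x0}" and c: "0 \<le> c"
  shows "(LBINT y:A. c * exp (- c * y) * (1 - \<rho> y - \<sigma> y)) \<le> (LBINT y:B. c * exp (- c * y) * (1 - \<rho> y - \<sigma> y))"
    "0 \<le> (LBINT y:A. c * exp (- c * y) * (1 - \<rho> y - \<sigma> y))"
proof -
  have b: "\<forall>t\<ge>0. 0 \<le> \<rho> t \<and> \<rho> t \<le> 1 \<and> 0 \<le> \<sigma> t \<and> \<sigma> t \<le> 1 \<and> \<rho> t + \<sigma> t \<le> 1"
    using st unfolding is_strategy_def by auto
  have nn: "0 \<le> c * exp (- c * y) * (1 - \<rho> y - \<sigma> y)" if "y \<in> B" for y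
  proof -
    have "0 \<le> y" using that AB by auto
    then have "0 \<le> 1 - \<rho> y - \<sigma> y" using strat_b[OF st] by force
    then show ?thesis using c by (intro mult_nonneg_nonneg) auto
  qed
  have iA: "integrable lborel (\<lambda>y. indicator A y *\<^sub>R (c * exp (- c * y) * (1 - \<rho> y - \<sigma> y)))"
    by (rule lb_int[OF st AB(1) _ c]) (use AB in blast)
  have iB: "integrable lborel (\<lambda>y. indicator B y *\<^sub>R (c * exp (- c * y) * (1 - \<rho> y - \<sigma> y)))"
    by (rule lb_int[OF st AB(2) AB(4) c])
  show "(LBINT y:A. c * exp (- c * y) * (1 - \<rho> y - \<sigma> y)) \<le> (LBINT y:B. c * exp (- c * y) * (1 - \<rho> y - \<sigma> y))"
    unfolding set_lebesgue_integral_def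
  proof (rule integral_mono[OF iA iB])
    fix y
    show "indicator A y *\<^sub>R (c * exp (- c * y) * (1 - \<rho> y - \<sigma> y)) \<le> indicator B y *\<^sub>R (c * exp (- c * y) * (1 - \<rho> y - \<sigma> y))"
    proof (cases "y \<in> B")
      case True then show ?thesis using nn[OF True] by (cases "y \<in> A") auto
    next
      case False then have "y \<notin> A" using AB by blast
      then show ?thesis using False by simp
    qed
  qed
  show "0 \<le> (LBINT y:A. c * exp (- c * y) * (1 - \<rho> y - \<sigma> y))"
    unfolding set_lebesgue_integral_def
  proof (rule Bochner_Integration.integral_nonneg)
    fix y
    show "0 \<le> indicator A y *\<^sub>R (c * exp (- c * y) * (1 - \<rho> y - \<sigma> y))"
    proof (cases "y \<in> A")
      case True then have "y \<in> B" using AB by blast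
      then show ?thesis using nn True by simp
    qed simp
  qed
qed

lemma lp_le1:
  fixes x c :: real
  assumes st: "is_strategy \<rho> \<sigma>" and c: "0 < c"
  shows "(LBINT y:{0..x}. c * exp (- c * y) * (1 - \<rho> y - \<sigma> y)) \<le> 1"
proof (cases "0 \<le> x")
  case False then show ?thesis by (simp add: set_lebesgue_integral_def)
next
  case True
  have b: "\<forall>t\<ge>0. 0 \<le> \<rho> t \<and> \<rho> t \<le> 1 \<and> 0 \<le> \<sigma> t \<and> \<sigma> t \<le> 1 \<and> \<rho> t + \<sigma> t \<le> 1"
    using st unfolding is_strategy_def by auto
  have iA: "integrable lborel (\<lambda>y. indicator {0..x} y *\<^sub>R (c * exp (- c * y) * (1 - \<rho> y - \<sigma> y)))"
    using c by (intro lb_int[OF st, of _ x]) auto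
  have iB: "integrable lborel (\<lambda>y. indicator {0..x} y *\<^sub>R (c * exp (- c * y)))"
    using borel_integrable_atLeastAtMost'[of 0 x "\<lambda>y. c * exp (- c * y)"] unfolding set_integrable_def
    by (simp add: continuous_on_mult continuous_on_exp continuous_on_minus continuous_on_const continuous_on_id)
  have "(LBINT y:{0..x}. c * exp (- c * y) * (1 - \<rho> y - \<sigma> y)) \<le> (\<integral>y. indicator {0..x} y *\<^sub>R (c * exp (- c * y)) \<partial>lborel)"
    unfolding set_lebesgue_integral_def
  proof (intro integral_mono iA iB)
    fix y
    show "indicator {0..x} y *\<^sub>R (c * exp (- c * y) * (1 - \<rho> y - \<sigma> y)) \<le> indicator {0..x} y *\<^sub>R (c * exp (- c * y))"
    proof (cases "y \<in> {0..x}")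
      case True
      then have "0 \<le> \<rho> y" "0 \<le> \<sigma> y" using b by auto
      then have "1 - \<rho> y - \<sigma> y \<le> 1" by simp
      then have "c * exp (- c * y) * (1 - \<rho> y - \<sigma> y) \<le> c * exp (- c * y) * 1"
        using c by (intro mult_left_mono) auto
      then show ?thesis using True by simp
    qed simp
  qed
  also have "\<dots> = 1 - exp (- c * x)" by (rule FTC_exp[OF True c])
  also have "\<dots> \<le> 1" by simp
  finally show ?thesis .
qed

lemma mp_point:
  fixes t c :: real
  assumes fm: "finite_measure M" and sM: "sets M = sets borel" and t: "0 \<le> t" and c: "0 \<le> c"
  shows "(\<integral>y. indicator {0..t} y * exp (- c * y) \<partial>M) - (\<integral>y. indicator {0..<t} y * exp (- c * y) \<partial>M)
     = exp (- c * t) * measure M {t}"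
proof -
  interpret finite_measure M by fact
  have sp: "space M = UNIV" using sM sets_eq_imp_space_eq by fastforce
  have "(\<integral>y. indicator {0..t} y * exp (- c * y) \<partial>M) - (\<integral>y. indicator {0..<t} y * exp (- c * y) \<partial>M)
      = (\<integral>y. indicator {0..t} y * exp (- c * y) - indicator {0..<t} y * exp (- c * y) \<partial>M)"
    using t c by (intro Bochner_Integration.integral_diff[symmetric] mu_int[OF fm sM]) auto
  also have "\<dots> = (\<integral>y. exp (- c * t) * indicator {t} y \<partial>M)"
    by (intro Bochner_Integration.integral_cong refl) (use t in \<open>auto simp: indicator_def\<close>)
  also have "\<dots> = exp (- c * t) * measure M {t}"
    using sp by simp
  finally show ?thesis .
qed

lemma cum_props:
  fixes x y s t :: real
  assumes sg: "standing g" and st: "is_strategy \<rho> \<sigma>"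
  shows "x \<le> y \<Longrightarrow> cumH g \<rho> \<sigma> x \<le> cumH g \<rho> \<sigma> y"
    "x \<le> y \<Longrightarrow> cumH_lt g \<rho> \<sigma> x \<le> cumH_lt g \<rho> \<sigma> y"
    "x \<le> y \<Longrightarrow> cumL g \<rho> x \<le> cumL g \<rho> y"
    "x \<le> y \<Longrightarrow> cumL_lt g \<rho> x \<le> cumL_lt g \<rho> y"
    "0 \<le> cumH_lt g \<rho> \<sigma> x" "cumH_lt g \<rho> \<sigma> x \<le> cumH g \<rho> \<sigma> x"
    "cumH g \<rho> \<sigma> x \<le> measure (stieltjes \<rho>) UNIV + 1"
    "0 \<le> cumL_lt g \<rho> x" "cumL_lt g \<rho> x \<le> cumL g \<rho> x"
    "cumL g \<rho> x \<le> measure (stieltjes \<rho>) UNIV + 1"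
    "s < t \<Longrightarrow> cumH g \<rho> \<sigma> s \<le> cumH_lt g \<rho> \<sigma> t"
    "s < t \<Longrightarrow> cumL g \<rho> s \<le> cumL_lt g \<rho> t"
    "0 \<le> t \<Longrightarrow> exp (- ra g * t) * measure (stieltjes \<rho>) {t} \<le> cumH g \<rho> \<sigma> t - cumH_lt g \<rho> \<sigma> t"
    "0 \<le> t \<Longrightarrow> cumL g \<rho> t - cumL_lt g \<rho> t = exp (- rb g * t) * measure (stieltjes \<rho>) {t}"
proof -
  interpret M: finite_borel_measure "stieltjes \<rho>" using strat_stj[OF st] by simp
  have fm: "finite_measure (stieltjes \<rho>)" by unfold_locales
  have sM: "sets (stieltjes \<rho>) = sets borel" by simp
  have a: "0 < ra g" and b: "0 < rb g" using sg unfolding standing_def by auto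
  note mp = mp_props[OF fm sM]
  note lp = lp_props[OF st]
  have lpm: "(LBINT y:A. ra g * exp (- ra g * y) * (1 - \<rho> y - \<sigma> y)) \<le> (LBINT y:B. ra g * exp (- ra g * y) * (1 - \<rho> y - \<sigma> y))"
    if "A \<in> sets borel" "B \<in> sets borel" "A \<subseteq> B" "B \<subseteq> {0..x0}" for A B x0
    using lp(1)[OF that] a by simp
  have lpn: "0 \<le> (LBINT y:A. ra g * exp (- ra g * y) * (1 - \<rho> y - \<sigma> y))"
    if "A \<in> sets borel" "A \<subseteq> {0..x0}" for A x0
    using lp(2)[OF that(1) that(1) _ that(2)] a by simp
  have mpm: "(\<integral>y. indicator A y * exp (- c * y) \<partial>stieltjes \<rho>) \<le> (\<integral>y. indicator B y * exp (- c * y) \<partial>stieltjes \<rho>)"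
    if "A \<in> sets borel" "B \<in> sets borel" "A \<subseteq> B" "B \<subseteq> {0..}" "0 \<le> c" for A B c
    using mp(1)[OF that] .
  have mpn: "0 \<le> (\<integral>y. indicator A y * exp (- c * y) \<partial>stieltjes \<rho>)"
    if "A \<in> sets borel" "A \<subseteq> {0..}" "0 \<le> c" for A c
    using mp(2)[OF that(1) that(1) _ that(2,3)] by simp
  have mpb: "(\<integral>y. indicator A y * exp (- c * y) \<partial>stieltjes \<rho>) \<le> measure (stieltjes \<rho>) UNIV"
    if "A \<in> sets borel" "A \<subseteq> {0..}" "0 \<le> c" for A c
    using mp(3)[OF that(1) that(1) _ that(2,3)] by simp
  have ca: "0 \<le> ra g" and cb: "0 \<le> rb g" using a b by auto
  show "x \<le> y \<Longrightarrow> cumH g \<rho> \<sigma> x \<le> cumH g \<rho> \<sigma> y"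
    unfolding cumH_def by (intro add_mono mpm[OF _ _ _ _ ca] lpm[of _ _ "\<bar>y\<bar>"]) auto
  show "x \<le> y \<Longrightarrow> cumH_lt g \<rho> \<sigma> x \<le> cumH_lt g \<rho> \<sigma> y"
    unfolding cumH_lt_def by (intro add_mono mpm[OF _ _ _ _ ca] lpm[of _ _ "\<bar>y\<bar>"]) auto
  show "x \<le> y \<Longrightarrow> cumL g \<rho> x \<le> cumL g \<rho> y"
    unfolding cumL_def by (intro mpm[OF _ _ _ _ cb]) auto
  show "x \<le> y \<Longrightarrow> cumL_lt g \<rho> x \<le> cumL_lt g \<rho> y"
    unfolding cumL_lt_def by (intro mpm[OF _ _ _ _ cb]) auto
  show "0 \<le> cumH_lt g \<rho> \<sigma> x"
    unfolding cumH_lt_def by (intro add_nonneg_nonneg mpn[OF _ _ ca] lpn[of _ "\<bar>x\<bar>"]) auto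
  show "cumH_lt g \<rho> \<sigma> x \<le> cumH g \<rho> \<sigma> x"
    unfolding cumH_def cumH_lt_def by (intro add_mono mpm[OF _ _ _ _ ca] lpm[of _ _ "\<bar>x\<bar>"]) auto
  have "(LBINT y:{0..x}. ra g * exp (- ra g * y) * (1 - \<rho> y - \<sigma> y)) \<le> 1"
    by (rule lp_le1[OF st a])
  then show "cumH g \<rho> \<sigma> x \<le> measure (stieltjes \<rho>) UNIV + 1"
    unfolding cumH_def by (intro add_mono mpb[OF _ _ ca]) auto
  show "0 \<le> cumL_lt g \<rho> x"
    unfolding cumL_lt_def by (intro mpn[OF _ _ cb]) auto
  show "cumL_lt g \<rho> x \<le> cumL g \<rho> x"
    unfolding cumL_def cumL_lt_def by (intro mpm[OF _ _ _ _ cb]) auto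
  show "cumL g \<rho> x \<le> measure (stieltjes \<rho>) UNIV + 1"
    unfolding cumL_def using mpb[OF _ _ cb, of "{0..x}"] by auto
  show "s < t \<Longrightarrow> cumH g \<rho> \<sigma> s \<le> cumH_lt g \<rho> \<sigma> t"
    unfolding cumH_def cumH_lt_def by (intro add_mono mpm[OF _ _ _ _ ca] lpm[of _ _ "\<bar>t\<bar>"]) auto
  show "s < t \<Longrightarrow> cumL g \<rho> s \<le> cumL_lt g \<rho> t"
    unfolding cumL_def cumL_lt_def by (intro mpm[OF _ _ _ _ cb]) auto
  show "0 \<le> t \<Longrightarrow> exp (- ra g * t) * measure (stieltjes \<rho>) {t} \<le> cumH g \<rho> \<sigma> t - cumH_lt g \<rho> \<sigma> t"
  proof -
    assume t: "0 \<le> t"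
    have "(LBINT y:{0..<t}. ra g * exp (- ra g * y) * (1 - \<rho> y - \<sigma> y)) \<le> (LBINT y:{0..t}. ra g * exp (- ra g * y) * (1 - \<rho> y - \<sigma> y))"
      by (intro lpm[of _ _ t]) auto
    then show ?thesis using mp_point[OF fm sM t ca] unfolding cumH_def cumH_lt_def by linarith
  qed
  show "0 \<le> t \<Longrightarrow> cumL g \<rho> t - cumL_lt g \<rho> t = exp (- rb g * t) * measure (stieltjes \<rho>) {t}"
    using mp_point[OF fm sM _ cb] unfolding cumL_def cumL_lt_def by simp
qed

lemma payR_props:
  fixes x s t :: real
  assumes sg: "standing g" and st: "is_strategy \<rho> \<sigma>"
  defines "KH \<equiv> \<bar>uH g\<bar> + (dbH g + 2 * dlH g) * (measure (stieltjes \<rho>) UNIV + 1)"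
  defines "KL \<equiv> \<bar>uL g\<bar> + (dbL g + 2 * dlL g) * (measure (stieltjes \<rho>) UNIV + 1)"
  shows "payR_H g \<rho> \<sigma> \<in> borel_measurable borel"
    "payR_L g \<rho> \<in> borel_measurable borel"
    "\<bar>payR_H g \<rho> \<sigma> x\<bar> \<le> KH" "\<bar>payR_L g \<rho> x\<bar> \<le> KL"
    "payR_H g \<rho> \<sigma> x \<le> uH g"
    "s < t \<Longrightarrow> uH g - dbH g * cumH_lt g \<rho> \<sigma> t \<le> payR_H g \<rho> \<sigma> s"
    "0 \<le> t \<Longrightarrow> payR_H g \<rho> \<sigma> t \<le> uH g - dbH g * cumH_lt g \<rho> \<sigma> t - dlH g * (exp (- ra g * t) * measure (stieltjes \<rho>) {t})"
    "s < t \<Longrightarrow> uL g - dbL g * cumL_lt g \<rho> t \<le> payR_L g \<rho> s"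
    "0 \<le> t \<Longrightarrow> payR_L g \<rho> t = uL g - dbL g * cumL_lt g \<rho> t - dlL g * (exp (- rb g * t) * measure (stieltjes \<rho>) {t})"
proof -
  note cp = cum_props[OF sg st]
  have [measurable]: "cumH g \<rho> \<sigma> \<in> borel_measurable borel" "cumH_lt g \<rho> \<sigma> \<in> borel_measurable borel"
      "cumL g \<rho> \<in> borel_measurable borel" "cumL_lt g \<rho> \<in> borel_measurable borel"
    using cp(1-4) by (auto intro!: borel_measurable_mono simp: mono_def)
  show "payR_H g \<rho> \<sigma> \<in> borel_measurable borel"
    unfolding payR_H_def[abs_def] by measurable
  show "payR_L g \<rho> \<in> borel_measurable borel"
    unfolding payR_L_def[abs_def] by measurable
  have pH: "0 < dlH g" "dlH g < dbH g" "0 < dlL g" "dlL g < dbL g" "0 < uH g"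
    using sg unfolding standing_def by auto
  define K where "K = measure (stieltjes \<rho>) UNIV + 1"
  have L0: "0 \<le> cumH_lt g \<rho> \<sigma> x" "cumH_lt g \<rho> \<sigma> x \<le> cumH g \<rho> \<sigma> x" "cumH g \<rho> \<sigma> x \<le> K"
    "0 \<le> cumL_lt g \<rho> x" "cumL_lt g \<rho> x \<le> cumL g \<rho> x" "cumL g \<rho> x \<le> K"
    using cp(5-10) unfolding K_def by auto
  have m1: "dbH g * cumH_lt g \<rho> \<sigma> x \<le> dbH g * K" "0 \<le> dbH g * cumH_lt g \<rho> \<sigma> x"
    using L0 pH by (auto intro!: mult_left_mono)
  have m2: "dlH g * (cumH g \<rho> \<sigma> x - cumH_lt g \<rho> \<sigma> x) \<le> dlH g * K" "0 \<le> dlH g * (cumH g \<rho> \<sigma> x - cumH_lt g \<rho> \<sigma> x)"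
    using L0 pH by (auto intro!: mult_left_mono)
  have m3: "dbL g * cumL_lt g \<rho> x \<le> dbL g * K" "0 \<le> dbL g * cumL_lt g \<rho> x"
    using L0 pH by (auto intro!: mult_left_mono)
  have m4: "dlL g * (cumL g \<rho> x - cumL_lt g \<rho> x) \<le> dlL g * K" "0 \<le> dlL g * (cumL g \<rho> x - cumL_lt g \<rho> x)"
    using L0 pH by (auto intro!: mult_left_mono)
  show "\<bar>payR_H g \<rho> \<sigma> x\<bar> \<le> KH"
    unfolding payR_H_def KH_def K_def[symmetric] using m1 m2 by (simp add: algebra_simps abs_le_iff) linarith
  show "\<bar>payR_L g \<rho> x\<bar> \<le> KL"
    unfolding payR_L_def KL_def K_def[symmetric] using m3 m4 by (simp add: algebra_simps abs_le_iff) linarith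
  show "payR_H g \<rho> \<sigma> x \<le> uH g"
    unfolding payR_H_def using m1 m2 by linarith
  show "s < t \<Longrightarrow> uH g - dbH g * cumH_lt g \<rho> \<sigma> t \<le> payR_H g \<rho> \<sigma> s"
  proof -
    assume "s < t"
    then have c1: "cumH g \<rho> \<sigma> s \<le> cumH_lt g \<rho> \<sigma> t" using cp(11) by simp
    have c2: "cumH_lt g \<rho> \<sigma> s \<le> cumH g \<rho> \<sigma> s" using cp(6) .
    have "(dbH g - dlH g) * cumH_lt g \<rho> \<sigma> s \<le> (dbH g - dlH g) * cumH_lt g \<rho> \<sigma> t"
      using c1 c2 pH by (intro mult_left_mono) auto
    moreover have "dlH g * cumH g \<rho> \<sigma> s \<le> dlH g * cumH_lt g \<rho> \<sigma> t"
      using c1 pH by (intro mult_left_mono) auto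
    ultimately show ?thesis unfolding payR_H_def by (simp add: algebra_simps)
  qed
  show "0 \<le> t \<Longrightarrow> payR_H g \<rho> \<sigma> t \<le> uH g - dbH g * cumH_lt g \<rho> \<sigma> t - dlH g * (exp (- ra g * t) * measure (stieltjes \<rho>) {t})"
  proof -
    assume "0 \<le> t"
    then have "exp (- ra g * t) * measure (stieltjes \<rho>) {t} \<le> cumH g \<rho> \<sigma> t - cumH_lt g \<rho> \<sigma> t" by (rule cp(13))
    then have "dlH g * (exp (- ra g * t) * measure (stieltjes \<rho>) {t}) \<le> dlH g * (cumH g \<rho> \<sigma> t - cumH_lt g \<rho> \<sigma> t)"
      using pH by (intro mult_left_mono) auto
    then show ?thesis unfolding payR_H_def by linarith
  qed
  show "s < t \<Longrightarrow> uL g - dbL g * cumL_lt g \<rho> t \<le> payR_L g \<rho> s"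
  proof -
    assume "s < t"
    then have c1: "cumL g \<rho> s \<le> cumL_lt g \<rho> t" using cp(12) by simp
    have c2: "cumL_lt g \<rho> s \<le> cumL g \<rho> s" using cp(9) .
    have "(dbL g - dlL g) * cumL_lt g \<rho> s \<le> (dbL g - dlL g) * cumL_lt g \<rho> t"
      using c1 c2 pH by (intro mult_left_mono) auto
    moreover have "dlL g * cumL g \<rho> s \<le> dlL g * cumL_lt g \<rho> t"
      using c1 pH by (intro mult_left_mono) auto
    ultimately show ?thesis unfolding payR_L_def by (simp add: algebra_simps)
  qed
  show "0 \<le> t \<Longrightarrow> payR_L g \<rho> t = uL g - dbL g * cumL_lt g \<rho> t - dlL g * (exp (- rb g * t) * measure (stieltjes \<rho>) {t})"
    using cp(14) unfolding payR_L_def by simp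
qed



lemma E_shift:
  fixes f :: "real \<Rightarrow> real"
  assumes st: "is_strategy \<rho> \<sigma>" and s: "0 \<le> s" "s < t"
    and f: "f \<in> borel_measurable borel" and fb: "\<And>x. \<bar>f x\<bar> \<le> K"
  shows "(\<integral>x. f x \<partial>stieltjes (\<lambda>x. \<rho> x + (if s \<le> x \<and> x < t then measure (stieltjes \<rho>) {t} else 0)))
       = (\<integral>x. f x \<partial>stieltjes \<rho>) + measure (stieltjes \<rho>) {t} * (f s - f t)"
proof -
  interpret M: finite_borel_measure "stieltjes \<rho>" using strat_stj[OF st] by simp
  have meas: "(\<lambda>y::real. if y = t then s else y) \<in> measurable (stieltjes \<rho>) borel"
    by measurable
  have fM: "f \<in> borel_measurable (stieltjes \<rho>)" by (subst measurable_cong_sets[OF sets_stieltjes refl]) (rule f)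
  have "(\<integral>x. f x \<partial>stieltjes (\<lambda>x. \<rho> x + (if s \<le> x \<and> x < t then measure (stieltjes \<rho>) {t} else 0)))
      = (\<integral>x. f x \<partial>distr (stieltjes \<rho>) borel (\<lambda>y. if y = t then s else y))"
    by (simp only: dev_stieltjes[OF st s])
  also have "\<dots> = (\<integral>x. f (if x = t then s else x) \<partial>stieltjes \<rho>)"
    by (rule integral_distr[OF meas f])
  also have "\<dots> = (\<integral>x. f x + (f s - f t) * indicator {t} x \<partial>stieltjes \<rho>)"
    by (intro Bochner_Integration.integral_cong refl) (simp add: indicator_def)
  also have "\<dots> = (\<integral>x. f x \<partial>stieltjes \<rho>) + (\<integral>x. (f s - f t) * indicator {t} x \<partial>stieltjes \<rho>)"
  proof (rule Bochner_Integration.integral_add)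
    show "integrable (stieltjes \<rho>) f"
      by (rule M.integrable_const_bound[where B=K, OF AE_I2 fM]) (simp add: fb)
    have im: "(\<lambda>x. (f s - f t) * indicator {t} x) \<in> borel_measurable (stieltjes \<rho>)"
      by measurable
    show "integrable (stieltjes \<rho>) (\<lambda>x. (f s - f t) * indicator {t} x)"
      by (rule M.integrable_const_bound[where B="\<bar>f s - f t\<bar>", OF AE_I2 im]) (simp add: indicator_def abs_mult)
  qed
  also have "\<dots> = (\<integral>x. f x \<partial>stieltjes \<rho>) + measure (stieltjes \<rho>) {t} * (f s - f t)"
    by simp
  finally show ?thesis .
qed

lemma interval_int_bound:
  fixes s t a B :: real and P :: "real \<Rightarrow> real"
  assumes P: "P \<in> borel_measurable borel" "\<And>x. \<bar>P x\<bar> \<le> B" and s: "0 \<le> s" "s \<le> t" and a: "0 \<le> a"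
  shows "integrable lborel (\<lambda>x. indicator {s..<t} x *\<^sub>R (exp (- a * x) * P x))"
proof (rule integrableI_bounded_set_indicator[where B=B])
  show "{s..<t} \<in> sets lborel" by simp
  show "(\<lambda>x. exp (- a * x) * P x) \<in> borel_measurable lborel" using P(1) by measurable
  show "emeasure lborel {s..<t} < \<infinity>" using s by simp
  show "AE x in lborel. x \<in> {s..<t} \<longrightarrow> norm (exp (- a * x) * P x) \<le> B"
  proof (rule AE_I2, intro impI)
    fix x assume "x \<in> {s..<t}"
    then have "0 \<le> a * x" using s a by (auto intro!: mult_nonneg_nonneg)
    then have e: "exp (- a * x) \<le> 1" by simp
    have "\<bar>exp (- a * x) * P x\<bar> = exp (- a * x) * \<bar>P x\<bar>" by (simp add: abs_mult)
    also have "\<dots> \<le> 1 * B" using e P(2)[of x] by (intro mult_mono) auto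
    finally show "norm (exp (- a * x) * P x) \<le> B" by simp
  qed
qed

theorem lemma1:
  fixes g :: params and \<rho> \<sigma> :: "real \<Rightarrow> real"
  assumes "standing g"
    and "sym_equilibrium g \<rho> \<sigma>"
  shows "\<forall>t>0. isCont \<rho> t"
proof (intro allI impI, rule ccontr)
  fix t :: real
  assume t: "t > 0" and nc: "\<not> isCont \<rho> t"
  have sg: "standing g" by fact
  have st: "is_strategy \<rho> \<sigma>" and opt: "\<And>\<rho>' \<sigma>'. is_strategy \<rho>' \<sigma>' \<Longrightarrow> payoff g \<rho>' \<sigma>' \<rho> \<sigma> \<le> payoff g \<rho> \<sigma> \<rho> \<sigma>"
    using assms(2) unfolding sym_equilibrium_def by auto
  define J where "J = measure (stieltjes \<rho>) {t}"
  have J: "0 < J"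
  proof -
    have "J \<noteq> 0" using atom_cont[OF st t] nc unfolding J_def by auto
    moreover have "0 \<le> J" unfolding J_def by simp
    ultimately show ?thesis by simp
  qed
  define a where "a = ra g"
  define b where "b = rb g"
  have pa: "0 < a" "0 < b" "0 < p0 g" "p0 g < 1" "0 < cost g" "0 < dlH g" "0 < dlL g" "0 < uH g"
    using sg unfolding standing_def a_def b_def by auto
  define QH where "QH = uH g - dbH g * cumH_lt g \<rho> \<sigma> t"
  define QL where "QL = uL g - dbL g * cumL_lt g \<rho> t"
  define h where "h = (\<lambda>s. p0 g * ((exp (- a * s) - exp (- a * t)) * QH - a * uH g * (t - s))
      + (1 - p0 g) * ((exp (- b * s) - exp (- b * t)) * QL))"
  define \<epsilon> where "\<epsilon> = p0 g * (exp (- a * t) * dlH g * exp (- a * t) * J)"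
  have eps: "0 < \<epsilon>" unfolding \<epsilon>_def using pa J by (intro mult_pos_pos) auto
  have ht: "h t = 0" unfolding h_def by simp
  have "isCont h t" unfolding h_def by (intro continuous_intros)
  then have "(h \<longlongrightarrow> h t) (at_left t)"
    unfolding isCont_def by (rule tendsto_mono[OF at_within_le_at])
  then have ev1: "eventually (\<lambda>s. - \<epsilon> < h s) (at_left t)"
    using eps ht by (intro order_tendstoD(1)) auto
  have ev2: "eventually (\<lambda>s. t / 2 < s) (at_left t)"
    using t by (intro order_tendstoD(1)[OF tendsto_ident_at]) auto
  have "eventually (\<lambda>s. - \<epsilon> < h s \<and> t / 2 < s) (at_left t)"
    using ev1 ev2 by (rule eventually_conj)
  then obtain bb where bb: "bb < t" "\<And>y. bb < y \<Longrightarrow> y < t \<Longrightarrow> - \<epsilon> < h y \<and> t / 2 < y"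
    unfolding eventually_at_left_field by blast
  define s where "s = (max bb (t/2) + t) / 2"
  have s: "bb < s" "s < t" using bb(1) t unfolding s_def by auto
  have hs: "- \<epsilon> < h s" and s0: "t / 2 < s" using bb(2)[OF s] by auto
  have s00: "0 \<le> s" using s0 t by simp
  define \<rho>s where "\<rho>s = (\<lambda>x. \<rho> x + (if s \<le> x \<and> x < t then measure (stieltjes \<rho>) {t} else 0))"
  have sts: "is_strategy \<rho>s \<sigma>" unfolding \<rho>s_def by (rule dev_strategy[OF st s00 s(2)])
  have le: "payoff g \<rho>s \<sigma> \<rho> \<sigma> \<le> payoff g \<rho> \<sigma> \<rho> \<sigma>" by (rule opt[OF sts])

  define PH where "PH = payR_H g \<rho> \<sigma>"
  define PL where "PL = payR_L g \<rho>"
  note pp = payR_props[OF sg st]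
  define KH where "KH = \<bar>uH g\<bar> + (dbH g + 2 * dlH g) * (measure (stieltjes \<rho>) UNIV + 1)"
  define KL where "KL = \<bar>uL g\<bar> + (dbL g + 2 * dlL g) * (measure (stieltjes \<rho>) UNIV + 1)"
  have PHm[measurable]: "PH \<in> borel_measurable borel" and PLm[measurable]: "PL \<in> borel_measurable borel"
    using pp(1,2) unfolding PH_def PL_def by auto
  have PHb: "\<bar>PH x\<bar> \<le> KH" and PLb: "\<bar>PL x\<bar> \<le> KL" for x
    using pp(3,4) unfolding PH_def PL_def KH_def KL_def by auto
  have PHu: "PH x \<le> uH g" for x using pp(5) unfolding PH_def by auto

  define EH where "EH = (\<lambda>r. (\<integral>x. indicator {0..} x * exp (- ra g * x) * payR_H g \<rho> \<sigma> x \<partial>stieltjes r))"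
  define AH where "AH = (\<lambda>r::real\<Rightarrow>real. (LBINT x:{0..}. ra g * exp (- ra g * x) * (1 - r x - \<sigma> x) * payR_H g \<rho> \<sigma> x))"
  define CH where "CH = (\<lambda>r::real\<Rightarrow>real. (LBINT x:{0..}. exp (- ra g * x) * (1 - r x - \<sigma> x)))"
  define EL where "EL = (\<lambda>r. (\<integral>x. indicator {0..} x * exp (- rb g * x) * payR_L g \<rho> x \<partial>stieltjes r))"
  define CL where "CL = (\<lambda>r::real\<Rightarrow>real. (LBINT x:{0..}. exp (- rb g * x) * (1 - r x - \<sigma> x)))"
  have pay: "payoff g r \<sigma> \<rho> \<sigma> = p0 g * (EH r + AH r - cost g * CH r) + (1 - p0 g) * (EL r - cost g * CL r)" for r
    unfolding payoff_def EH_def AH_def CH_def EL_def CL_def by simp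

  define fH where "fH = (\<lambda>x. indicator {0..} x * exp (- a * x) * PH x)"
  define fL where "fL = (\<lambda>x. indicator {0..} x * exp (- b * x) * PL x)"
  have fb: "\<bar>fH x\<bar> \<le> KH" "\<bar>fL x\<bar> \<le> KL" for x
  proof -
    have e: "indicator {0..} x * exp (- a * x) \<le> (1::real)" "0 \<le> indicator {0..} x * exp (- a * x)"
        "indicator {0..} x * exp (- b * x) \<le> (1::real)" "0 \<le> indicator {0..} x * exp (- b * x)"
      using pa by (auto simp: indicator_def mult_nonneg_nonneg)
    have "\<bar>fH x\<bar> = (indicator {0..} x * exp (- a * x)) * \<bar>PH x\<bar>" unfolding fH_def using e(2) by (simp add: abs_mult)
    also have "\<dots> \<le> 1 * KH" using e PHb[of x] by (intro mult_mono) auto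
    finally show "\<bar>fH x\<bar> \<le> KH" by simp
    have "\<bar>fL x\<bar> = (indicator {0..} x * exp (- b * x)) * \<bar>PL x\<bar>" unfolding fL_def using e(4) by (simp add: abs_mult)
    also have "\<dots> \<le> 1 * KL" using e PLb[of x] by (intro mult_mono) auto
    finally show "\<bar>fL x\<bar> \<le> KL" by simp
  qed
  have fHm: "fH \<in> borel_measurable borel" unfolding fH_def by measurable
  have fLm: "fL \<in> borel_measurable borel" unfolding fL_def by measurable
  have EHs: "EH \<rho>s = EH \<rho> + J * (fH s - fH t)"
    using E_shift[OF st s00 s(2) fHm fb(1)] unfolding EH_def fH_def \<rho>s_def J_def PH_def a_def by simp
  have ELs: "EL \<rho>s = EL \<rho> + J * (fL s - fL t)"
    using E_shift[OF st s00 s(2) fLm fb(2)] unfolding EL_def fL_def \<rho>s_def J_def PL_def b_def by simp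

  have fHs: "exp (- a * s) * QH \<le> fH s"
  proof -
    have "QH \<le> PH s" using pp(6)[OF s(2)] unfolding QH_def PH_def .
    then show ?thesis unfolding fH_def using s00 by (simp add: indicator_def)
  qed
  have fHt: "fH t \<le> exp (- a * t) * QH - exp (- a * t) * dlH g * exp (- a * t) * J"
  proof -
    have "PH t \<le> QH - dlH g * (exp (- a * t) * J)"
      using pp(7)[of t] t unfolding QH_def PH_def a_def J_def by simp
    then have "exp (- a * t) * PH t \<le> exp (- a * t) * (QH - dlH g * (exp (- a * t) * J))"
      by (intro mult_left_mono) auto
    then show ?thesis unfolding fH_def using t by (simp add: indicator_def algebra_simps)
  qed
  have fLs: "exp (- b * s) * QL \<le> fL s"
  proof -
    have "QL \<le> PL s" using pp(8)[OF s(2)] unfolding QL_def PL_def .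
    then show ?thesis unfolding fL_def using s00 by (simp add: indicator_def)
  qed
  have fLt: "fL t = exp (- b * t) * QL - exp (- b * t) * dlL g * exp (- b * t) * J"
  proof -
    have "PL t = QL - dlL g * (exp (- b * t) * J)"
      using pp(9)[of t] t unfolding QL_def PL_def b_def J_def by simp
    moreover have "fL t = exp (- b * t) * PL t" unfolding fL_def using t by (simp add: indicator_def)
    ultimately show ?thesis by (simp add: right_diff_distrib)
  qed

  have gint: "integrable lborel (\<lambda>x. indicator {s..<t} x *\<^sub>R (exp (- a * x) * PH x))"
    by (rule interval_int_bound[OF PHm PHb s00 less_imp_le[OF s(2)]]) (use pa in auto)
  have AHs: "AH \<rho>s \<ge> AH \<rho> - J * (a * uH g * (t - s))"
  proof -
    have eq: "(\<lambda>x. indicator {0..} x *\<^sub>R (ra g * exp (- ra g * x) * (1 - \<rho>s x - \<sigma> x) * payR_H g \<rho> \<sigma> x))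
      = (\<lambda>x. indicator {0..} x *\<^sub>R (ra g * exp (- ra g * x) * (1 - \<rho> x - \<sigma> x) * payR_H g \<rho> \<sigma> x)
          - J * a * (indicator {s..<t} x *\<^sub>R (exp (- a * x) * PH x)))"
    proof
      fix x show "indicator {0..} x *\<^sub>R (ra g * exp (- ra g * x) * (1 - \<rho>s x - \<sigma> x) * payR_H g \<rho> \<sigma> x)
          = indicator {0..} x *\<^sub>R (ra g * exp (- ra g * x) * (1 - \<rho> x - \<sigma> x) * payR_H g \<rho> \<sigma> x)
          - J * a * (indicator {s..<t} x *\<^sub>R (exp (- a * x) * PH x))"
      proof (cases "s \<le> x \<and> x < t")
        case True then have "0 \<le> x" using s00 by auto
        then show ?thesis using True unfolding \<rho>s_def J_def a_def PH_def by (simp add: indicator_def algebra_simps)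
      next
        case False then have "x \<notin> {s..<t}" by auto
        then show ?thesis unfolding \<rho>s_def J_def a_def PH_def by (simp only: if_not_P[OF False]) simp
      qed
    qed
    have gi: "integrable lborel (\<lambda>x. J * a * (indicator {s..<t} x *\<^sub>R (exp (- a * x) * PH x)))"
      using gint by (rule integrable_mult_right)
    have ub: "(\<integral>x. J * a * (indicator {s..<t} x *\<^sub>R (exp (- a * x) * PH x)) \<partial>lborel) \<le> J * (a * uH g * (t - s))"
    proof -
      have "(\<integral>x. indicator {s..<t} x *\<^sub>R (exp (- a * x) * PH x) \<partial>lborel) \<le> (\<integral>x. indicator {s..<t} x * uH g \<partial>lborel)"
      proof (rule integral_mono[OF gint])
        show "integrable lborel (\<lambda>x. indicator {s..<t} x * uH g)" using s by simp
        fix x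
        show "indicator {s..<t} x *\<^sub>R (exp (- a * x) * PH x) \<le> indicator {s..<t} x * uH g"
        proof (cases "x \<in> {s..<t}")
          case True
          then have "0 \<le> a * x" using s00 pa by (auto intro!: mult_nonneg_nonneg)
          then have e: "exp (- a * x) \<le> 1" "0 < exp (- a * x)" by auto
          have "exp (- a * x) * PH x \<le> uH g"
          proof (cases "0 \<le> PH x")
            case True
            then have "exp (- a * x) * PH x \<le> 1 * PH x" using e by (intro mult_right_mono) auto
            then show ?thesis using PHu[of x] by simp
          next
            case False
            then have "exp (- a * x) * PH x \<le> 0" using e(2) by (intro mult_nonneg_nonpos) auto
            then show ?thesis using pa by simp
          qed
          then show ?thesis using True by simp
        qed simp
      qed
      also have "\<dots> = uH g * (t - s)" using s by simp
      finally have "(\<integral>x. indicator {s..<t} x *\<^sub>R (exp (- a * x) * PH x) \<partial>lborel) \<le> uH g * (t - s)" .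
      then have "J * a * (\<integral>x. indicator {s..<t} x *\<^sub>R (exp (- a * x) * PH x) \<partial>lborel) \<le> J * a * (uH g * (t - s))"
        using J pa by (intro mult_left_mono) auto
      then show ?thesis by (simp add: algebra_simps)
    qed
    have B0: "0 \<le> J * (a * uH g * (t - s))" using J pa s by auto
    show ?thesis
      unfolding AH_def set_lebesgue_integral_def eq
      using int_diff_ge[OF gi ub B0] by simp
  qed

  have CHs: "CH \<rho>s \<le> CH \<rho>"
  proof -
    have eq: "(\<lambda>x. indicator {0..} x *\<^sub>R (exp (- ra g * x) * (1 - \<rho>s x - \<sigma> x)))
      = (\<lambda>x. indicator {0..} x *\<^sub>R (exp (- ra g * x) * (1 - \<rho> x - \<sigma> x))
          - J * (indicator {s..<t} x *\<^sub>R (exp (- a * x) * 1)))"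
    proof
      fix x show "indicator {0..} x *\<^sub>R (exp (- ra g * x) * (1 - \<rho>s x - \<sigma> x))
          = indicator {0..} x *\<^sub>R (exp (- ra g * x) * (1 - \<rho> x - \<sigma> x))
          - J * (indicator {s..<t} x *\<^sub>R (exp (- a * x) * 1))"
      proof (cases "s \<le> x \<and> x < t")
        case True then have "0 \<le> x" using s00 by auto
        then show ?thesis using True unfolding \<rho>s_def J_def a_def by (simp add: indicator_def algebra_simps)
      next
        case False then have "x \<notin> {s..<t}" by auto
        then show ?thesis unfolding \<rho>s_def J_def a_def by (simp only: if_not_P[OF False]) simp
      qed
    qed
    have gi0: "integrable lborel (\<lambda>x. indicator {s..<t} x *\<^sub>R (exp (- a * x) * (\<lambda>_. 1::real) x))"
      by (rule interval_int_bound[where B=1]) (use pa s00 s in auto)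
    have gi: "integrable lborel (\<lambda>x. J * (indicator {s..<t} x *\<^sub>R (exp (- a * x) * 1)))"
      using gi0 by (intro integrable_mult_right) simp
    have nn: "0 \<le> (\<integral>x. J * (indicator {s..<t} x *\<^sub>R (exp (- a * x) * 1)) \<partial>lborel)"
      using J by (intro Bochner_Integration.integral_nonneg) (auto simp: indicator_def)
    show ?thesis
      unfolding CH_def set_lebesgue_integral_def eq
      using int_diff_le[OF gi nn] by simp
  qed
  have CLs: "CL \<rho>s \<le> CL \<rho>"
  proof -
    have eq: "(\<lambda>x. indicator {0..} x *\<^sub>R (exp (- rb g * x) * (1 - \<rho>s x - \<sigma> x)))
      = (\<lambda>x. indicator {0..} x *\<^sub>R (exp (- rb g * x) * (1 - \<rho> x - \<sigma> x))
          - J * (indicator {s..<t} x *\<^sub>R (exp (- b * x) * 1)))"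
    proof
      fix x show "indicator {0..} x *\<^sub>R (exp (- rb g * x) * (1 - \<rho>s x - \<sigma> x))
          = indicator {0..} x *\<^sub>R (exp (- rb g * x) * (1 - \<rho> x - \<sigma> x))
          - J * (indicator {s..<t} x *\<^sub>R (exp (- b * x) * 1))"
      proof (cases "s \<le> x \<and> x < t")
        case True then have "0 \<le> x" using s00 by auto
        then show ?thesis using True unfolding \<rho>s_def J_def b_def by (simp add: indicator_def algebra_simps)
      next
        case False then have "x \<notin> {s..<t}" by auto
        then show ?thesis unfolding \<rho>s_def J_def b_def by (simp only: if_not_P[OF False]) simp
      qed
    qed
    have gi0: "integrable lborel (\<lambda>x. indicator {s..<t} x *\<^sub>R (exp (- b * x) * (\<lambda>_. 1::real) x))"
      by (rule interval_int_bound[where B=1]) (use pa s00 s in auto)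
    have gi: "integrable lborel (\<lambda>x. J * (indicator {s..<t} x *\<^sub>R (exp (- b * x) * 1)))"
      using gi0 by (intro integrable_mult_right) simp
    have nn: "0 \<le> (\<integral>x. J * (indicator {s..<t} x *\<^sub>R (exp (- b * x) * 1)) \<partial>lborel)"
      using J by (intro Bochner_Integration.integral_nonneg) (auto simp: indicator_def)
    show ?thesis
      unfolding CL_def set_lebesgue_integral_def eq
      using int_diff_le[OF gi nn] by simp
  qed

  define XH where "XH = (exp (- a * s) - exp (- a * t)) * QH + exp (- a * t) * dlH g * exp (- a * t) * J"
  define XL where "XL = (exp (- b * s) - exp (- b * t)) * QL + exp (- b * t) * dlL g * exp (- b * t) * J"
  have DH: "(EH \<rho>s + AH \<rho>s - cost g * CH \<rho>s) - (EH \<rho> + AH \<rho> - cost g * CH \<rho>) \<ge> J * XH - J * (a * uH g * (t - s))"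
  proof -
    have "XH \<le> fH s - fH t" unfolding XH_def using fHs fHt by (simp add: algebra_simps)
    then have "J * XH \<le> J * (fH s - fH t)" using J by (intro mult_left_mono) auto
    moreover have "cost g * CH \<rho>s \<le> cost g * CH \<rho>" using CHs pa by (intro mult_left_mono) auto
    ultimately show ?thesis using EHs AHs by linarith
  qed
  have DL: "(EL \<rho>s - cost g * CL \<rho>s) - (EL \<rho> - cost g * CL \<rho>) \<ge> J * XL"
  proof -
    have "XL \<le> fL s - fL t" unfolding XL_def using fLs fLt by (simp add: algebra_simps)
    then have "J * XL \<le> J * (fL s - fL t)" using J by (intro mult_left_mono) auto
    moreover have "cost g * CL \<rho>s \<le> cost g * CL \<rho>" using CLs pa by (intro mult_left_mono) auto
    ultimately show ?thesis using ELs by linarith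
  qed
  have "payoff g \<rho>s \<sigma> \<rho> \<sigma> - payoff g \<rho> \<sigma> \<rho> \<sigma>
     = p0 g * ((EH \<rho>s + AH \<rho>s - cost g * CH \<rho>s) - (EH \<rho> + AH \<rho> - cost g * CH \<rho>))
       + (1 - p0 g) * ((EL \<rho>s - cost g * CL \<rho>s) - (EL \<rho> - cost g * CL \<rho>))"
    unfolding pay by (simp add: algebra_simps)
  also have "\<dots> \<ge> p0 g * (J * XH - J * (a * uH g * (t - s))) + (1 - p0 g) * (J * XL)"
    using DH DL pa by (intro add_mono mult_left_mono) auto
  finally have D: "payoff g \<rho>s \<sigma> \<rho> \<sigma> - payoff g \<rho> \<sigma> \<rho> \<sigma> \<ge> p0 g * (J * XH - J * (a * uH g * (t - s))) + (1 - p0 g) * (J * XL)" .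
  have "p0 g * (J * XH - J * (a * uH g * (t - s))) + (1 - p0 g) * (J * XL)
      = J * (h s + \<epsilon> + (1 - p0 g) * (exp (- b * t) * dlL g * exp (- b * t) * J))"
    unfolding XH_def XL_def h_def \<epsilon>_def by (simp add: algebra_simps)
  also have "\<dots> > 0"
  proof -
    have "0 \<le> (1 - p0 g) * (exp (- b * t) * dlL g * exp (- b * t) * J)"
      using pa J by (intro mult_nonneg_nonneg) auto
    then have "0 < h s + \<epsilon> + (1 - p0 g) * (exp (- b * t) * dlL g * exp (- b * t) * J)" using hs by linarith
    then show ?thesis using J by simp
  qed
  finally show False using D le by linarith
qed

end
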